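(* Let $q>2$ be a prime power and let $u,v$ be arbitrary non-zero elements of $\mathbb{F}_q$. Set $\theta=\theta(q-1)$, $\tau=\tau(q-1)$, $W=W(q-1)$. Then $$\left| N(q,u,v) - \theta^3\tau\,(q-1)\, q\right| \leq \theta^4 W^3\,(q-1)\sqrt{q}.$$
   Context: $\mathbb{F}_q$ is the finite field of order $q$. A primitive element of $\mathbb{F}_q$ is a generator of the cyclic group $\mathbb{F}_q^*$. For non-zero $u,v\in\mathbb{F}_q$, a pair $(a,b)$ of primitive elements of $\mathbb{F}_q$ is called $(u,v)$-primitive if additionally $ua+vb$ and $va^{-1}+ub^{-1}$ are both primitive; $N(q,u,v)$ denotes the number of $(u,v)$-primitive pairs in $\mathbb{F}_q$. For a positive integer $m$: $\omega(m)$ is the number of distinct prime divisors of $m$, $W(m)=2^{\omega(m)}$, $\theta(m)=\phi(m)/m$ with $\phi$ Euler's function, and $\tau(m)=\prod_{l\mid m}\left(1-\frac{1}{l-1}+\frac{1}{(l-1)^2}\right)$, the product over the distinct primes $l$ dividing $m$. *)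

theory Defs
  imports "HOL-Number_Theory.Number_Theory" "HOL-Library.Cardinality"
begin

text \<open>The finite field F_q is modelled as a finite field type 'a with q = CARD('a).
  A primitive element is a generator of the cyclic multiplicative group F_q^*.\<close>

definition primitive_elem :: "'a::{field,finite} \<Rightarrow> bool" where
  "primitive_elem x \<longleftrightarrow> x \<noteq> 0 \<and> (\<forall>y. y \<noteq> 0 \<longrightarrow> (\<exists>k::nat. y = x ^ k))"

definition uv_primitive :: "'a::{field,finite} \<Rightarrow> 'a \<Rightarrow> 'a \<Rightarrow> 'a \<Rightarrow> bool" where
  "uv_primitive u v a b \<longleftrightarrow> primitive_elem a \<and> primitive_elem b \<and>
     primitive_elem (u * a + v * b) \<and> primitive_elem (v * inverse a + u * inverse b)"

definition N_uv :: "'a::{field,finite} \<Rightarrow> 'a \<Rightarrow> nat" where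
  "N_uv u v = card {(a, b). uv_primitive u v a b}"

definition omega_nat :: "nat \<Rightarrow> nat" where
  "omega_nat m = card (prime_factors m)"

definition W_nat :: "nat \<Rightarrow> nat" where
  "W_nat m = 2 ^ omega_nat m"

definition theta_nat :: "nat \<Rightarrow> real" where
  "theta_nat m = real (totient m) / real m"

definition tau_nat :: "nat \<Rightarrow> real" where
  "tau_nat m = (\<Prod>l\<in>prime_factors m.
      1 - 1 / (real l - 1) + 1 / (real l - 1) ^ 2)"

end

theory Submission
  imports Defs "HOL-Algebra.Multiplicative_Group"
begin

definition fld_of_type :: "'a::field ring" where
 "fld_of_type = \<lparr>carrier = UNIV, monoid.mult = (*), one = 1, ring.zero = 0, add = (+)\<rparr>"

lemma field_fld_of_type: "field (fld_of_type :: 'a::field ring)"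
proof -
  have "\<exists>y. x + y = 0" for x :: 'a
    using add.right_inverse by blast
  moreover have "x \<noteq> 0 \<Longrightarrow> \<exists>y. x * y = 1" for x :: 'a
    by (rule exI[of _ "inverse x"]) auto
  ultimately show ?thesis
    unfolding fld_of_type_def 
    apply unfold_locales
    apply (auto simp:algebra_simps Units_def)
    done
qed
lemma exists_gen: "\<exists>g::'a::{field,finite}. g \<noteq> 0 \<and> (\<forall>y. y\<noteq>0 \<longrightarrow> (\<exists>k::nat. y = g^k))"
proof -
  interpret F: field "fld_of_type :: 'a ring" by (rule field_fld_of_type)
  have "finite (carrier (fld_of_type :: 'a ring))" by (simp add: fld_of_type_def)
  note G = F.finite_field_mult_group_has_gen[OF this]
  obtain a where
    a: "a \<in> carrier (mult_of (fld_of_type :: 'a ring))"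
    "carrier (mult_of (fld_of_type :: 'a ring)) = {a[^]\<^bsub>(fld_of_type :: 'a ring)\<^esub>i | i::nat . i \<in> UNIV}"
    by (rule bexE[OF G], rule that, assumption+)
  have pw: "a [^]\<^bsub>(fld_of_type :: 'a ring)\<^esub> (i::nat) = a ^ i" for i
    by (induction i) (simp_all add: fld_of_type_def mult_of_def)
  have c: "carrier (mult_of (fld_of_type :: 'a ring)) = UNIV - {0}"
    by (simp add: fld_of_type_def mult_of_def)
  show ?thesis
  proof (intro exI[of _ a] conjI allI impI)
    show "a \<noteq> 0" using a(1) c by auto
    fix y :: 'a assume "y \<noteq> 0"
    then have "y \<in> carrier (mult_of (fld_of_type :: 'a ring))" using c by auto
    then show "\<exists>k. y = a ^ k" using a(2) pw by auto
  qed
qed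


lemma card_nonzero: "card (UNIV - {0::'a::{field,finite}}) = CARD('a) - 1"
  by (simp add: card_Diff_singleton)

lemma pow_card_minus_one:
  fixes x :: "'a::{field,finite}"
  assumes "x \<noteq> 0"
  shows "x ^ (CARD('a) - 1) = 1"
proof -
  let ?F = "UNIV - {0::'a}"
  have inj: "inj_on ((*) x) ?F" using assms by (auto simp: inj_on_def)
  have img: "(*) x ` ?F = ?F"
  proof
    show "(*) x ` ?F \<subseteq> ?F" using assms by auto
    show "?F \<subseteq> (*) x ` ?F"
    proof
      fix y assume "y \<in> ?F"
      then have "y = x * (inverse x * y)" "inverse x * y \<in> ?F" using assms by auto
      then show "y \<in> (*) x ` ?F" by blast
    qed
  qed
  have "(\<Prod>y\<in>?F. x * y) = (\<Prod>y\<in>?F. y)"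
    using prod.reindex[OF inj, of id] img by simp
  moreover have "(\<Prod>y\<in>?F. x * y) = x ^ card ?F * (\<Prod>y\<in>?F. y)"
    by (simp add: prod.distrib)
  moreover have "(\<Prod>y\<in>?F. y) \<noteq> 0" by simp
  ultimately have "x ^ card ?F = 1" by simp
  then show ?thesis by (simp add: card_nonzero)
qed

locale gsetup =
  fixes g :: "'a::{field,finite}" and m :: nat
  assumes gen: "primitive_elem g" and m_def: "m = CARD('a) - 1"
begin

lemma g_nz: "g \<noteq> 0" using gen by (simp add: primitive_elem_def)

lemma m_pos: "m > 0"
proof -
  have "card {0::'a, 1} \<le> CARD('a)" by (rule card_mono) auto
  then show ?thesis by (simp add: m_def)
qed

lemma g_pow_m: "g ^ m = 1" using pow_card_minus_one[OF g_nz] m_def by simp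

lemma g_pow_mod: "g ^ k = g ^ (k mod m)"
proof -
  have "g ^ k = g ^ (m * (k div m) + k mod m)" by simp
  also have "\<dots> = (g ^ m) ^ (k div m) * g ^ (k mod m)" by (simp only: power_add power_mult)
  finally show ?thesis by (simp add: g_pow_m)
qed

lemma g_surj: "y \<noteq> 0 \<Longrightarrow> \<exists>k<m. y = g ^ k"
proof -
  assume "y \<noteq> 0"
  then obtain k where "y = g ^ k" using gen by (auto simp: primitive_elem_def)
  then show ?thesis using g_pow_mod[of k] m_pos by (intro exI[of _ "k mod m"]) auto
qed

lemma g_img: "(\<lambda>k. g ^ k) ` {..<m} = UNIV - {0}"
  using g_surj g_nz by fastforce

lemma g_inj: "inj_on (\<lambda>k. g ^ k) {..<m}"
  using g_img by (simp add: inj_on_iff_eq_card card_nonzero m_def)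

lemma g_pow_eq: "g ^ a = g ^ b \<longleftrightarrow> a mod m = b mod m"
proof
  assume "g ^ a = g ^ b"
  then have "g ^ (a mod m) = g ^ (b mod m)" using g_pow_mod by metis
  then show "a mod m = b mod m" using g_inj m_pos by (auto simp: inj_on_def)
next
  assume "a mod m = b mod m"
  then show "g ^ a = g ^ b" using g_pow_mod by metis
qed

definition L :: "'a \<Rightarrow> nat" where "L x = inv_into {..<m} (\<lambda>k. g ^ k) x"

lemma L_lt: "x \<noteq> 0 \<Longrightarrow> L x < m"
  unfolding L_def using g_img by (metis DiffI UNIV_I inv_into_into lessThan_iff singletonD)

lemma g_L: "x \<noteq> 0 \<Longrightarrow> g ^ L x = x"
  unfolding L_def using g_img by (simp add: f_inv_into_f)

lemma L_g: "L (g ^ k) = k mod m"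
proof -
  have "g ^ k = g ^ (k mod m)" by (rule g_pow_mod)
  moreover have "L (g ^ (k mod m)) = k mod m"
    unfolding L_def using g_inj m_pos by (simp add: inv_into_f_f)
  ultimately show ?thesis by simp
qed

lemma L_mult: "x \<noteq> 0 \<Longrightarrow> y \<noteq> 0 \<Longrightarrow> L (x * y) = (L x + L y) mod m"
proof -
  assume "x \<noteq> 0" "y \<noteq> 0"
  then have "x * y = g ^ (L x + L y)" by (simp add: power_add g_L)
  then show ?thesis using L_g by simp
qed

lemma prim_iff: "primitive_elem x \<longleftrightarrow> x \<noteq> 0 \<and> coprime (L x) m"
proof (cases "x = 0")
  case True then show ?thesis by (simp add: primitive_elem_def)
next
  case False
  let ?j = "L x"
  have xj: "x = g ^ ?j" using g_L[OF False] by simp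
  show ?thesis
  proof
    assume "primitive_elem x"
    then obtain k where "g = x ^ k" using g_nz by (auto simp: primitive_elem_def)
    then have "g ^ 1 = g ^ (?j * k)" using xj by (simp add: power_mult)
    then have "[?j * k = 1] (mod m)" using g_pow_eq unfolding cong_def by metis
    then have "coprime (?j * k) m"
      by (metis cong_imp_coprime cong_sym coprime_1_left)
    then show "x \<noteq> 0 \<and> coprime ?j m" using False by simp
  next
    assume "x \<noteq> 0 \<and> coprime ?j m"
    then obtain j' where j': "[?j * j' = 1] (mod m)" using cong_solve_coprime_nat[of "L x" m] by auto
    have "x ^ j' = g" using j' xj g_pow_eq[of "?j * j'" 1] by (simp add: power_mult cong_def)
    then show "primitive_elem x" using False gen
      by (auto simp: primitive_elem_def power_mult[symmetric] intro: exI[of _ "j' * _"]) (metis power_mult)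
  qed
qed

end


definition E :: "real \<Rightarrow> complex" where "E t = cis (2 * pi * t)"

lemma E_add: "E (a + b) = E a * E b"
  by (simp add: E_def cis_mult distrib_left)

lemma E_zero[simp]: "E 0 = 1" by (simp add: E_def)

lemma E_int: "E (of_int k) = 1"
  unfolding E_def by (rule cis_multiple_2pi) simp

lemma E_add_int: "E (t + of_int k) = E t"
  by (simp add: E_add E_int)

lemma E_pow: "E t ^ n = E (real n * t)"
  by (simp add: E_def DeMoivre mult_ac)

lemma E_norm[simp]: "cmod (E t) = 1" by (simp add: E_def)

lemma E_cnj: "cnj (E t) = E (- t)" by (simp add: E_def cis_cnj)

lemma E_eq_1: "E t = 1 \<Longrightarrow> \<exists>k::int. t = of_int k"
proof -
  assume "E t = 1"
  then have "cos (2 * pi * t) = 1" unfolding E_def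
    by (metis complex.sel(1) cis.sel(1) one_complex.sel(1))
  then obtain k :: int where "2 * pi * t = real_of_int k * 2 * pi" using cos_one_2pi_int by blast
  then have "t = of_int k" by simp
  then show ?thesis by blast
qed

lemma geo:
  assumes "0 < l"
  shows "(\<Sum>s<l. E (real s * of_int k / real l)) = (if int l dvd k then of_nat l else 0)"
proof -
  define z where "z = E (of_int k / real l)"
  have zs: "E (real s * of_int k / real l) = z ^ s" for s
    by (simp add: z_def E_pow)
  have sum: "(\<Sum>s<l. E (real s * of_int k / real l)) = (\<Sum>s<l. z ^ s)" by (simp add: zs)
  show ?thesis
  proof (cases "int l dvd k")
    case True
    then obtain j where "k = int l * j" by (auto elim: dvdE)
    then have "z = 1" using assms by (simp add: z_def E_int)
    then show ?thesis using True sum by simp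
  next
    case False
    have "z \<noteq> 1"
    proof
      assume "z = 1"
      then obtain j :: int where "of_int k / real l = of_int j" using E_eq_1[of "of_int k / real l"] z_def by auto
      then have "of_int k = real l * of_int j" using assms by (simp add: field_simps)
      then have "k = int l * j" by (metis of_int_eq_iff of_int_mult of_int_of_nat_eq)
      then show False using False by simp
    qed
    moreover have "z ^ l = 1" using assms by (simp add: z_def E_pow E_int)
    ultimately show ?thesis using False sum by (simp add: sum_gp_strict)
  qed
qed

context gsetup
begin

definition chi :: "int \<Rightarrow> 'a \<Rightarrow> complex" where
  "chi n x = E (of_int n * real (L x) / real m)"

lemma chi_mult:
  assumes "x \<noteq> 0" "y \<noteq> 0"
  shows "chi n (x * y) = chi n x * chi n y"
proof -
  have "L x + L y = m * ((L x + L y) div m) + L (x * y)" using L_mult[OF assms] by simp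
  then have eq: "real (L x) + real (L y) = real m * real ((L x + L y) div m) + real (L (x*y))"
    by (metis of_nat_add of_nat_mult)
  have "chi n x * chi n y = E (of_int n * (real (L x) + real (L y)) / real m)"
    by (simp add: chi_def E_add[symmetric] add_divide_distrib distrib_left)
  also have "of_int n * (real (L x) + real (L y)) / real m
      = of_int n * real (L (x*y)) / real m + of_int (n * int ((L x + L y) div m))"
    using m_pos by (simp add: eq field_simps)
  finally have "chi n x * chi n y = E (of_int n * real (L (x*y)) / real m + of_int (n * int ((L x + L y) div m)))" .
  then show ?thesis unfolding chi_def by (metis E_add_int)
qed

lemma chi_add: "chi (a + b) x = chi a x * chi b x"
  by (simp add: chi_def E_add[symmetric] add_divide_distrib distrib_right)

lemma chi_dvd: "int m dvd n \<Longrightarrow> chi n x = 1"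
proof -
  assume "int m dvd n"
  then obtain j where "n = int m * j" by (auto elim: dvdE)
  then have "of_int n * real (L x) / real m = of_int (j * int (L x))" using m_pos by simp
  then show ?thesis unfolding chi_def by (metis E_int)
qed

lemma chi_norm[simp]: "cmod (chi n x) = 1" by (simp add: chi_def)

lemma chi_neg: "chi (- n) x = cnj (chi n x)"
  by (simp add: chi_def E_cnj)

lemma chi_cnj_mult: "chi n x * cnj (chi n x) = 1"
  by (metis chi_norm complex_norm_square mult.commute of_real_1 power_one)

lemma L_one: "L 1 = 0"
  using L_g[of 0] by simp

lemma chi_one[simp]: "chi n 1 = 1" by (simp add: chi_def L_one)

lemma chi_inverse:
  assumes "x \<noteq> 0"
  shows "chi n (inverse x) = cnj (chi n x)"
proof -
  have "chi n (inverse x) * chi n x = 1"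
    using chi_mult[of "inverse x" x n] assms by simp
  then have "chi n (inverse x) * chi n x * cnj (chi n x) = cnj (chi n x)" by simp
  then show ?thesis by (simp add: mult.assoc chi_cnj_mult)
qed

lemma chi_sum: "(\<Sum>x\<in>UNIV - {0}. chi n x) = (if int m dvd n then of_nat m else 0)"
proof -
  have "(\<Sum>x\<in>UNIV - {0}. chi n x) = (\<Sum>k<m. chi n (g ^ k))"
    using sum.reindex[OF g_inj, of "chi n"] g_img by simp
  also have "\<dots> = (\<Sum>k<m. E (real k * of_int n / real m))"
    by (intro sum.cong refl) (simp add: chi_def L_g mult.commute)
  also have "\<dots> = (if int m dvd n then of_nat m else 0)" using geo[OF m_pos] by simp
  finally show ?thesis .
qed

end


lemma E_sum: "E (\<Sum>i\<in>A. f i) = (\<Prod>i\<in>A. E (f i))"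
proof (cases "finite A")
  case True then show ?thesis by (induction A rule: finite_induct) (simp_all add: E_add)
qed simp

definition aw :: "nat \<Rightarrow> nat \<Rightarrow> real" where
  "aw l s = (if s = 0 then 1 else 0) - 1 / real l"

lemma coprime_iff_pf:
  assumes "(m::nat) > 0"
  shows "coprime k m \<longleftrightarrow> (\<forall>l\<in>prime_factors m. \<not> l dvd k)"
proof
  assume c: "coprime k m"
  show "\<forall>l\<in>prime_factors m. \<not> l dvd k"
  proof (intro ballI notI)
    fix l assume l: "l \<in> prime_factors m" "l dvd k"
    then have pl: "prime l" "l dvd m" by (simp_all add: in_prime_factors_iff)
    have "is_unit l" by (rule coprime_common_divisor[OF c l(2) pl(2)])
    then show False using pl(1) by (simp add: not_prime_unit)
  qed
next
  assume h: "\<forall>l\<in>prime_factors m. \<not> l dvd k"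
  show "coprime k m"
  proof (rule ccontr)
    assume "\<not> coprime k m"
    then have "gcd k m \<noteq> 1" using coprime_iff_gcd_eq_1 by blast
    from prime_factor_nat[OF this] obtain p where p: "prime p" "p dvd gcd k m" by blast
    have pk: "p dvd k" and pm: "p dvd m" using p(2) by simp_all
    have "p \<in> prime_factors m" using assms p(1) pm by (simp add: in_prime_factors_iff)
    then show False using h pk by blast
  qed
qed

lemma of_bool_all_prod:
  assumes "finite P"
  shows "(of_bool (\<forall>l\<in>P. \<not> Q l) :: complex) = (\<Prod>l\<in>P. 1 - of_bool (Q l))"
proof (cases "\<forall>l\<in>P. \<not> Q l")
  case True then show ?thesis by simp
next
  case False
  then obtain l0 where "l0 \<in> P" "Q l0" by blast
  have "\<exists>l\<in>P. (1 - of_bool (Q l) :: complex) = 0"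
    using \<open>l0 \<in> P\<close> \<open>Q l0\<close> by (intro bexI[of _ l0]) simp_all
  then have z: "(\<Prod>l\<in>P. 1 - of_bool (Q l) :: complex) = 0"
    by (rule prod_zero[OF assms])
  have "(of_bool (\<forall>l\<in>P. \<not> Q l) :: complex) = 0" using False by (simp only: of_bool_eq(1))
  then show ?thesis using z by simp
qed

lemma one_minus_dvd:
  assumes "0 < l"
  shows "(1 - of_bool (l dvd k) :: complex)
    = (\<Sum>s<l. of_real (aw l s) * E (real s * of_int (int k) / real l))"
proof -
  let ?e = "\<lambda>s. E (real s * of_int (int k) / real l)"
  have h: "of_real (aw l s) * ?e s = (if s = 0 then ?e s else 0) - of_real (1 / real l) * ?e s" for s
    unfolding aw_def of_real_diff left_diff_distrib by simp
  have "(\<Sum>s<l. of_real (aw l s) * ?e s)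
      = (\<Sum>s<l. (if s = 0 then ?e s else 0)) - of_real (1 / real l) * (\<Sum>s<l. ?e s)"
    unfolding h sum_subtractf sum_distrib_left ..
  also have "(\<Sum>s<l. (if s = 0 then ?e s else 0)) = 1" using assms by (simp add: sum.delta)
  also have "(\<Sum>s<l. ?e s) = (if int l dvd int k then of_nat l else 0)" by (rule geo[OF assms])
  finally show ?thesis using assms by (cases "l dvd k") simp_all
qed

context gsetup
begin

definition Tup :: "(nat \<Rightarrow> nat) set" where
  "Tup = PiE (prime_factors m) (\<lambda>l. {..<l})"

definition w :: "(nat \<Rightarrow> nat) \<Rightarrow> real" where
  "w t = (\<Prod>l\<in>prime_factors m. aw l (t l))"

definition sig :: "(nat \<Rightarrow> nat) \<Rightarrow> nat" where
  "sig t = (\<Sum>l\<in>prime_factors m. (m div l) * t l)"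

lemma indicator:
  assumes "x \<noteq> 0"
  shows "(of_bool (primitive_elem x) :: complex) = (\<Sum>t\<in>Tup. of_real (w t) * chi (int (sig t)) x)"
proof -
  let ?P = "prime_factors m"
  let ?k = "L x"
  have "(of_bool (primitive_elem x) :: complex) = of_bool (\<forall>l\<in>?P. \<not> l dvd ?k)"
    using assms prim_iff coprime_iff_pf[OF m_pos] by simp
  also have "\<dots> = (\<Prod>l\<in>?P. 1 - of_bool (l dvd ?k))" by (rule of_bool_all_prod) simp
  also have "\<dots> = (\<Prod>l\<in>?P. \<Sum>s<l. of_real (aw l s) * E (real s * of_int (int ?k) / real l))"
    by (intro prod.cong refl one_minus_dvd) (auto simp: in_prime_factors_iff prime_gt_0_nat)
  also have "\<dots> = (\<Sum>t\<in>Tup. \<Prod>l\<in>?P. of_real (aw l (t l)) * E (real (t l) * of_int (int ?k) / real l))"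
    unfolding Tup_def by (rule prod_sum_PiE) auto
  also have "\<dots> = (\<Sum>t\<in>Tup. of_real (w t) * chi (int (sig t)) x)"
  proof (intro sum.cong refl)
    fix t assume "t \<in> Tup"
    have "(\<Prod>l\<in>?P. of_real (aw l (t l)) * E (real (t l) * of_int (int ?k) / real l))
        = of_real (w t) * E (\<Sum>l\<in>?P. real (t l) * of_int (int ?k) / real l)"
      by (simp only: prod.distrib w_def E_sum of_real_prod)
    also have "(\<Sum>l\<in>?P. real (t l) * of_int (int ?k) / real l) = real (sig t) * real ?k / real m"
    proof -
      have "real (m div l) = real m / real l" if "l \<in> ?P" for l
        using that by (intro real_of_nat_div) (simp add: in_prime_factors_iff)
      then have "(\<Sum>l\<in>?P. real (t l) * of_int (int ?k) / real l)
          = (\<Sum>l\<in>?P. real (m div l) * real (t l) * real ?k / real m)"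
      proof (intro sum.cong refl)
        fix l assume l: "l \<in> ?P"
        then have "l > 0" by (simp add: in_prime_factors_iff prime_gt_0_nat)
        then show "real (t l) * of_int (int ?k) / real l = real (m div l) * real (t l) * real ?k / real m"
          using m_pos l \<open>\<And>l. l \<in> ?P \<Longrightarrow> real (m div l) = real m / real l\<close>[OF l]
          by (simp add: field_simps)
      qed
      also have "\<dots> = real (sig t) * real ?k / real m"
        unfolding sig_def of_nat_sum of_nat_mult sum_divide_distrib sum_distrib_right ..
      finally show ?thesis .
    qed
    finally show "(\<Prod>l\<in>?P. of_real (aw l (t l)) * E (real (t l) * of_int (int ?k) / real l))
        = of_real (w t) * chi (int (sig t)) x" by (simp add: chi_def)
  qed
  finally show ?thesis .
qed

end


lemma sum_split0:
  assumes "0 < l"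
  shows "(\<Sum>s<l. h s) = h 0 + (\<Sum>s<l - 1. h (Suc s))"
proof -
  obtain l' where "l = Suc l'" using assms by (cases l) auto
  then show ?thesis by (simp del: sum.lessThan_Suc add: sum.lessThan_Suc_shift)
qed

lemma aw_abs_sum:
  assumes "2 \<le> l"
  shows "(\<Sum>s<l. \<bar>aw l s\<bar>) = 2 * (1 - 1 / real l)"
proof -
  have "(\<Sum>s<l. \<bar>aw l s\<bar>) = (1 - 1 / real l) + real (l - 1) * (1 / real l)"
    using assms by (subst sum_split0) (simp_all add: aw_def)
  also have "\<dots> = 2 * (1 - 1 / real l)" using assms by (simp add: of_nat_diff field_simps)
  finally show ?thesis .
qed

lemma aw_four_sum:
  assumes "2 \<le> l"
  shows "(\<Sum>s<l. (aw l s) ^ 4) = (1 - 1 / real l) ^ 3 * (1 - 1 / (real l - 1) + 1 / (real l - 1) ^ 2)"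
proof -
  have "(\<Sum>s<l. (aw l s) ^ 4) = (1 - 1 / real l) ^ 4 + real (l - 1) * (1 / real l) ^ 4"
    using assms by (subst sum_split0) (simp_all add: aw_def)
  also have "\<dots> = (1 - 1 / real l) ^ 3 * (1 - 1 / (real l - 1) + 1 / (real l - 1) ^ 2)"
  proof -
    define x where "x = real l"
    have x: "x \<ge> 2" using assms by (simp add: x_def)
    have "real (l - 1) = x - 1" using assms by (simp add: x_def of_nat_diff)
    moreover have "(1 - 1 / x) ^ 4 + (x - 1) * (1 / x) ^ 4 = (1 - 1 / x) ^ 3 * (1 - 1 / (x - 1) + 1 / (x - 1) ^ 2)"
    proof -
      have x0: "x \<noteq> 0" "x - 1 \<noteq> 0" using x by auto
      have a: "1 - 1 / x = (x - 1) / x" using x0 by (simp add: field_simps)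
      have b0: "1 - 1 / y + 1 / y ^ 2 = (y^2 - y + 1) / y^2" if "y \<noteq> 0" for y :: real
        using that by (simp add: field_simps power2_eq_square)
      have b1: "(x - 1)^2 - (x - 1) + 1 = x^2 - 3*x + 3"
        by (simp add: power2_eq_square algebra_simps)
      have b: "1 - 1 / (x - 1) + 1 / (x - 1) ^ 2 = (x^2 - 3*x + 3) / (x - 1)^2"
        using b0[OF x0(2)] b1 by simp
      have c: "(x - 1) ^ 4 + (x - 1) = x * (x - 1) * (x^2 - 3*x + 3)"
        by (simp add: power2_eq_square power4_eq_xxxx algebra_simps)
      have "(1 - 1 / x) ^ 4 + (x - 1) * (1 / x) ^ 4 = ((x - 1) ^ 4 + (x - 1)) / x ^ 4"
        unfolding a by (simp add: power_divide add_divide_distrib)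
      also have "\<dots> = (x - 1) * (x^2 - 3*x + 3) / x ^ 3"
        unfolding c using x0 by (simp add: field_simps power_eq_if)
      also have "\<dots> = ((x - 1) / x) ^ 3 * ((x^2 - 3*x + 3) / (x - 1)^2)"
      proof -
        have "y * Q / x ^ 3 = (y / x) ^ 3 * (Q / y^2)" if "y \<noteq> 0" for y Q :: real
          using that x0 by (simp add: power_divide power2_eq_square power3_eq_cube)
        from this[OF x0(2)] show ?thesis .
      qed
      finally show ?thesis unfolding a b .
    qed
    ultimately show ?thesis by (simp add: x_def)
  qed
  finally show ?thesis .
qed

lemma aw_abs_le:
  assumes "2 \<le> l" "s < l"
  shows "\<bar>aw l s\<bar> \<le> 1 - 1 / real l"
proof -
  have "1 / real l \<le> 1 / 2" using assms by (simp add: field_simps)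
  then show ?thesis using assms by (simp add: aw_def)
qed

lemma pf_ge2: "l \<in> prime_factors (n::nat) \<Longrightarrow> 2 \<le> l"
  by (simp add: in_prime_factors_iff prime_ge_2_nat)

context gsetup
begin

abbreviation P where "P \<equiv> prime_factors m"

definition th :: real where "th = (\<Prod>l\<in>P. 1 - 1 / real l)"

lemma theta_eq: "theta_nat m = th"
  using totient_formula2[of m] m_pos by (simp add: theta_nat_def th_def)

lemma W_eq: "W_nat m = 2 ^ card P"
  by (simp add: W_nat_def omega_nat_def)

lemma th_nonneg: "0 \<le> th"
  unfolding th_def by (intro prod_nonneg) (auto dest: pf_ge2 simp: field_simps)

lemma finite_Tup: "finite Tup"
  unfolding Tup_def by (intro finite_PiE) auto

lemma sum_abs_w: "(\<Sum>t\<in>Tup. \<bar>w t\<bar>) = th * 2 ^ card P"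
proof -
  have "(\<Sum>t\<in>Tup. \<bar>w t\<bar>) = (\<Sum>t\<in>Tup. \<Prod>l\<in>P. \<bar>aw l (t l)\<bar>)"
    by (simp add: w_def abs_prod)
  also have "\<dots> = (\<Prod>l\<in>P. \<Sum>s<l. \<bar>aw l s\<bar>)"
    unfolding Tup_def by (rule prod_sum_PiE[symmetric]) auto
  also have "\<dots> = (\<Prod>l\<in>P. 2 * (1 - 1 / real l))"
    by (intro prod.cong refl aw_abs_sum pf_ge2)
  also have "\<dots> = th * 2 ^ card P" unfolding prod.distrib prod_constant th_def by (simp only: mult.commute)
  finally show ?thesis .
qed

lemma abs_w_le: "t \<in> Tup \<Longrightarrow> \<bar>w t\<bar> \<le> th"
  unfolding w_def th_def abs_prod Tup_def
  by (intro prod_mono) (auto simp: PiE_iff dest: pf_ge2 intro: aw_abs_le)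

lemma sum_w4: "(\<Sum>t\<in>Tup. (w t) ^ 4) = th ^ 3 * tau_nat m"
proof -
  have "(\<Sum>t\<in>Tup. (w t) ^ 4) = (\<Sum>t\<in>Tup. \<Prod>l\<in>P. (aw l (t l)) ^ 4)"
    by (simp add: w_def prod_power_distrib)
  also have "\<dots> = (\<Prod>l\<in>P. \<Sum>s<l. (aw l s) ^ 4)"
    unfolding Tup_def by (rule prod_sum_PiE[symmetric]) auto
  also have "\<dots> = (\<Prod>l\<in>P. (1 - 1 / real l) ^ 3 * (1 - 1 / (real l - 1) + 1 / (real l - 1) ^ 2))"
    by (intro prod.cong refl aw_four_sum pf_ge2)
  also have "\<dots> = th ^ 3 * tau_nat m" by (simp add: prod.distrib th_def tau_nat_def prod_power_distrib)
  finally show ?thesis .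
qed

end


context gsetup
begin

lemma pf_prime: "l \<in> P \<Longrightarrow> prime l" by (simp add: in_prime_factors_iff)
lemma pf_dvd: "l \<in> P \<Longrightarrow> l dvd m" by (simp add: in_prime_factors_iff)

lemma sig_inj:
  assumes t: "t \<in> Tup" and t': "t' \<in> Tup" and d: "int m dvd (int (sig t) - int (sig t'))"
  shows "t = t'"
proof -
  have fin: "finite P" by simp
  have "t l0 = t' l0" if l0: "l0 \<in> P" for l0
  proof -
    define d where "d l = int (t l) - int (t' l)" for l
    define Q where "Q = (\<Prod>l\<in>P - {l0}. int l)"
    have sd: "int (sig t) - int (sig t') = (\<Sum>l\<in>P. int (m div l) * d l)"
      by (simp add: sig_def d_def sum_subtractf algebra_simps)
    have mdiv: "int (m div l) * int l = int m" if "l \<in> P" for l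
      using pf_dvd[OF that] by (metis dvd_mult_div_cancel mult.commute of_nat_mult)
    have "int m dvd Q * (int (m div l) * d l)" if "l \<in> P - {l0}" for l
    proof -
      have "int l dvd Q" unfolding Q_def using that by (intro dvd_prodI) auto
      then obtain r where "Q = int l * r" by (auto elim: dvdE)
      then have "Q * (int (m div l) * d l) = int m * (r * d l)"
        using mdiv[of l] that by (simp add: algebra_simps)
      then show ?thesis by (metis dvd_triv_left)
    qed
    then have d1: "int m dvd (\<Sum>l\<in>P - {l0}. Q * (int (m div l) * d l))"
      by (intro dvd_sum) auto
    have "Q * (int (sig t) - int (sig t')) = Q * (int (m div l0) * d l0) + (\<Sum>l\<in>P - {l0}. Q * (int (m div l) * d l))"
      unfolding sd sum_distrib_left using l0 fin by (simp add: sum.remove)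
    moreover have "int m dvd Q * (int (sig t) - int (sig t'))" using d by simp
    ultimately have "int m dvd Q * (int (sig t) - int (sig t')) - (\<Sum>l\<in>P - {l0}. Q * (int (m div l) * d l))"
      using d1 by (intro dvd_diff)
    then have "int m dvd Q * (int (m div l0) * d l0)"
      using \<open>Q * (int (sig t) - int (sig t')) = _\<close> by simp
    then have "int (m div l0) * int l0 dvd int (m div l0) * (Q * d l0)"
      using mdiv[OF l0] by (simp add: algebra_simps)
    moreover have "int (m div l0) \<noteq> 0"
    proof
      assume "int (m div l0) = 0"
      then have "int m = 0" using mdiv[OF l0] by simp
      then show False using m_pos by simp
    qed
    ultimately have dv: "int l0 dvd Q * d l0" by simp
    have pl0: "prime (int l0)" using pf_prime[OF l0] by simp
    have "\<not> int l0 dvd Q"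
    proof
      assume "int l0 dvd Q"
      then obtain l where l: "l \<in> P - {l0}" "int l0 dvd int l"
        unfolding Q_def using pl0 by (subst (asm) prime_dvd_prod_iff) auto
      then have "l0 dvd l" by simp
      then have "l0 = l" using pf_prime[OF l0] pf_prime[of l] l(1) by (simp add: primes_dvd_imp_eq)
      then show False using l(1) by simp
    qed
    then have dd: "int l0 dvd d l0" using dv pl0 by (simp add: prime_dvd_mult_iff)
    have "t l0 < l0" "t' l0 < l0" using t t' l0 by (auto simp: Tup_def PiE_iff)
    then have "\<bar>d l0\<bar> < int l0" by (simp add: d_def)
    have "d l0 = 0"
    proof (rule ccontr)
      assume "d l0 \<noteq> 0"
      then have "\<bar>int l0\<bar> \<le> \<bar>d l0\<bar>" using dd by (rule dvd_imp_le_int)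
      then show False using \<open>\<bar>d l0\<bar> < int l0\<close> by simp
    qed
    then show ?thesis by (simp add: d_def)
  qed
  then show ?thesis using t t' unfolding Tup_def by (intro PiE_ext) auto
qed

definition neg :: "(nat \<Rightarrow> nat) \<Rightarrow> (nat \<Rightarrow> nat)" where
  "neg t = (\<lambda>l. if l \<in> P then (l - t l) mod l else undefined)"

lemma neg_Tup: "t \<in> Tup \<Longrightarrow> neg t \<in> Tup"
  unfolding Tup_def neg_def using pf_ge2 by (auto simp: PiE_iff extensional_def)

lemma neg_zero_iff:
  assumes "l \<in> P" "s < l"
  shows "(l - s) mod l = 0 \<longleftrightarrow> s = 0"
proof (cases "s = 0")
  case True then show ?thesis by simp
next
  case False
  then have "0 < l - s" "l - s < l" using assms by auto
  then show ?thesis using False by simp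
qed

lemma w_neg: "t \<in> Tup \<Longrightarrow> w (neg t) = w t"
  unfolding w_def
proof (intro prod.cong refl)
  fix l assume t: "t \<in> Tup" and l: "l \<in> P"
  then have "t l < l" by (auto simp: Tup_def PiE_iff)
  then show "aw l (neg t l) = aw l (t l)"
    using neg_zero_iff[OF l] l by (simp add: neg_def aw_def)
qed

lemma sig_neg: "t \<in> Tup \<Longrightarrow> int m dvd int (sig t) + int (sig (neg t))"
proof -
  assume t: "t \<in> Tup"
  have "sig t + sig (neg t) = (\<Sum>l\<in>P. m * (if t l = 0 then 0 else 1))"
    unfolding sig_def sum.distrib[symmetric]
  proof (intro sum.cong refl)
    fix l assume l: "l \<in> P"
    then have tl: "t l < l" using t by (auto simp: Tup_def PiE_iff)
    have md: "m div l * l = m" using pf_dvd[OF l] by simp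
    show "m div l * t l + m div l * neg t l = m * (if t l = 0 then 0 else 1)"
    proof (cases "t l = 0")
      case True then show ?thesis using l by (simp add: neg_def)
    next
      case False
      then have "neg t l = l - t l" using l tl by (simp add: neg_def)
      then have "m div l * t l + m div l * neg t l = m div l * l"
        using tl by (simp add: algebra_simps)
      then show ?thesis using md False by simp
    qed
  qed
  also have "\<dots> = m * (\<Sum>l\<in>P. (if t l = 0 then 0 else 1))" by (simp add: sum_distrib_left)
  finally have "m dvd sig t + sig (neg t)" by (simp only: dvd_triv_left)
  then have "int m dvd int (sig t + sig (neg t))" by (simp only: int_dvd_int_iff)
  then show ?thesis by (simp only: of_nat_add)
qed

end


lemma bij1:
  fixes u v s t :: "'a::field"
  assumes "u \<noteq> 0" "v \<noteq> 0" "s \<noteq> 0" "t \<noteq> 0" "u + v * s \<noteq> 0" "u + v * t \<noteq> 0" "s \<noteq> t"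
  defines "x \<equiv> s / t" and "y \<equiv> (u + v * s) / (u + v * t)"
  shows "x \<noteq> 0" "x \<noteq> 1" "y \<noteq> 0" "y \<noteq> 1" "x \<noteq> y" "x * (u * (y - 1) / (v * (x - y))) = s"
    "u * (y - 1) / (v * (x - y)) = t"
proof -
  have st: "s - t \<noteq> 0" using assms by simp
  have ym: "y - 1 = v * (s - t) / (u + v * t)" unfolding y_def using assms by (simp add: field_simps)
  have xy: "x - y = u * (s - t) / (t * (u + v * t))" unfolding x_def y_def using assms by (simp add: field_simps)
  show "x \<noteq> 0" "y \<noteq> 0" using assms by (simp_all add: x_def y_def)
  show "x \<noteq> 1" using assms by (simp add: x_def)
  show "y \<noteq> 1" using ym assms st by auto
  show "x \<noteq> y" using xy assms st by auto
  have gen: "u * (v * K / D) / (v * (u * K / (t * D))) = t" if "K \<noteq> 0" "D \<noteq> 0" for K D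
    using that assms by (simp add: field_simps)
  show r: "u * (y - 1) / (v * (x - y)) = t" unfolding ym xy using assms st by (intro gen) simp_all
  show "x * (u * (y - 1) / (v * (x - y))) = s" unfolding r using assms by (simp add: x_def)
qed

lemma bij2:
  fixes u v x y :: "'a::field"
  assumes "u \<noteq> 0" "v \<noteq> 0" "x \<noteq> 0" "x \<noteq> 1" "y \<noteq> 0" "y \<noteq> 1" "x \<noteq> y"
  defines "r \<equiv> u * (y - 1) / (v * (x - y))"
  shows "r \<noteq> 0" "x * r \<noteq> 0" "u + v * r \<noteq> 0" "u + v * (x * r) \<noteq> 0" "x * r \<noteq> r"
    "x * r / r = x" "(u + v * (x * r)) / (u + v * r) = y"
proof -
  have xy: "x - y \<noteq> 0" "y - 1 \<noteq> 0" "x - 1 \<noteq> 0" using assms by auto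
  have a: "u + v * r = u * (x - 1) / (x - y)" unfolding r_def using assms xy by (simp add: field_simps)
  have b: "u + v * (x * r) = u * y * (x - 1) / (x - y)" unfolding r_def using assms xy by (simp add: field_simps)
  show r0: "r \<noteq> 0" unfolding r_def using assms xy by simp
  show "x * r \<noteq> 0" using r0 assms by simp
  show "u + v * r \<noteq> 0" unfolding a using assms xy by simp
  show "u + v * (x * r) \<noteq> 0" unfolding b using assms xy by simp
  show "x * r \<noteq> r" using r0 assms by simp
  show "x * r / r = x" using r0 by simp
  have gen: "(u * y * K1 / K2) / (u * K1 / K2) = y" if "K1 \<noteq> 0" "K2 \<noteq> 0" for K1 K2
    using that assms by (simp add: field_simps)
  show "(u + v * (x * r)) / (u + v * r) = y" unfolding a b using assms xy by (intro gen) simp_all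
qed

context gsetup
begin

lemma chi_div:
  assumes "x \<noteq> 0" "y \<noteq> 0"
  shows "chi n (x / y) = chi n x * cnj (chi n y)"
  using assms by (simp add: divide_inverse chi_mult chi_inverse)

definition Tset :: "'a \<Rightarrow> 'a \<Rightarrow> 'a set" where
  "Tset u v = {t. t \<noteq> 0 \<and> u + v * t \<noteq> 0}"

definition Jt :: "'a \<Rightarrow> 'a \<Rightarrow> int \<Rightarrow> int \<Rightarrow> complex" where
  "Jt u v B C = (\<Sum>t\<in>Tset u v. chi B t * chi C (u + v * t))"

lemma card_Tset:
  assumes "u \<noteq> 0" "v \<noteq> 0"
  shows "card (Tset u v) = CARD('a) - 2"
proof -
  have e: "u + v * t = 0 \<longleftrightarrow> t = - u / v" for t
  proof -
    have "u + v * t = 0 \<longleftrightarrow> v * t = - u" by (simp add: add_eq_0_iff)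
    also have "\<dots> \<longleftrightarrow> t = - u / v" using assms by (auto simp: field_simps)
    finally show ?thesis .
  qed
  have "Tset u v = UNIV - {0, - u / v}"
    unfolding Tset_def using e by auto
  moreover have "card {0, - u / v} = 2" using assms by simp
  ultimately show ?thesis by (simp add: card_Diff_subset)
qed

lemma J_triv:
  assumes "u \<noteq> 0" "v \<noteq> 0" "int m dvd B" "int m dvd C"
  shows "Jt u v B C = of_nat (CARD('a) - 2)"
  unfolding Jt_def using assms by (simp add: chi_dvd card_Tset)

lemma J_le:
  assumes "u \<noteq> 0" "v \<noteq> 0"
  shows "cmod (Jt u v B C) \<le> real (CARD('a) - 2)"
proof -
  have "cmod (Jt u v B C) \<le> (\<Sum>t\<in>Tset u v. cmod (chi B t * chi C (u + v * t)))"
    unfolding Jt_def by (rule norm_sum)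
  also have "\<dots> = real (card (Tset u v))" by (simp add: norm_mult)
  finally show ?thesis using card_Tset[OF assms] by simp
qed

end


context gsetup
begin

lemma sumG: "(\<Sum>x\<in>UNIV - {0, 1}. chi n x) = (if int m dvd n then of_nat m else 0) - 1"
proof -
  have "(\<Sum>x\<in>UNIV - {0}. chi n x) = chi n 1 + (\<Sum>x\<in>(UNIV - {0}) - {1}. chi n x)"
    by (rule sum.remove) auto
  moreover have "(UNIV - {0}) - {1} = (UNIV - {0, 1::'a})" by auto
  ultimately show ?thesis using chi_sum[of n] by simp
qed

lemma J_sq:
  assumes u: "u \<noteq> 0" and v: "v \<noteq> 0" and nd: "\<not> (int m dvd B \<and> int m dvd C)"
  shows "(cmod (Jt u v B C))^2 \<le> real CARD('a)"
proof -
  define T where "T = Tset u v"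
  define f where "f t = chi B t * chi C (u + v * t)" for t
  define h where "h p = chi B (fst p / snd p) * chi C ((u + v * fst p) / (u + v * snd p))" for p
  define k where "k p = chi B (fst p) * chi C (snd p)" for p :: "'a \<times> 'a"
  define G where "G = UNIV - {0, 1::'a}"
  define Dia where "Dia = (\<lambda>s. (s, s)) ` T"
  define V where "V = {p \<in> G \<times> G. fst p \<noteq> snd p}"
  define rs where "rs n = (if int m dvd n then real m else 0) - 1" for n
  have sG: "(\<Sum>x\<in>G. chi n x) = of_real (rs n)" for n
    unfolding G_def rs_def sumG by simp
  have Tmem: "t \<in> T \<longleftrightarrow> t \<noteq> 0 \<and> u + v * t \<noteq> 0" for t by (simp add: T_def Tset_def)
  have J: "Jt u v B C = (\<Sum>t\<in>T. f t)" by (simp add: Jt_def T_def f_def)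
  have "of_real ((cmod (Jt u v B C))^2) = (\<Sum>t\<in>T. f t) * cnj (\<Sum>t\<in>T. f t)"
    unfolding J by (rule complex_norm_square)
  also have "\<dots> = (\<Sum>s\<in>T. \<Sum>t\<in>T. f s * cnj (f t))" by (simp add: sum_product)
  also have "\<dots> = (\<Sum>p\<in>T \<times> T. f (fst p) * cnj (f (snd p)))"
    by (simp add: sum.cartesian_product case_prod_beta)
  also have "\<dots> = (\<Sum>p\<in>T \<times> T. h p)"
  proof (intro sum.cong refl)
    fix p assume "p \<in> T \<times> T"
    then have "fst p \<noteq> 0" "snd p \<noteq> 0" "u + v * fst p \<noteq> 0" "u + v * snd p \<noteq> 0"
      by (auto simp: Tmem)
    then show "f (fst p) * cnj (f (snd p)) = h p"
      by (simp add: f_def h_def chi_div mult_ac)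
  qed
  also have "\<dots> = (\<Sum>p\<in>(T \<times> T) - Dia. h p) + (\<Sum>p\<in>Dia. h p)"
    by (rule sum.subset_diff) (auto simp: Dia_def)
  also have "(\<Sum>p\<in>Dia. h p) = of_nat (card T)"
  proof -
    have "(\<Sum>p\<in>Dia. h p) = (\<Sum>s\<in>T. h (s, s))"
      unfolding Dia_def by (subst sum.reindex) (auto simp: inj_on_def)
    also have "\<dots> = (\<Sum>s\<in>T. 1)"
      by (intro sum.cong refl) (auto simp: h_def Tmem)
    finally show ?thesis by simp
  qed
  also have "(\<Sum>p\<in>(T \<times> T) - Dia. h p) = (\<Sum>p\<in>V. k p)"
  proof (rule sum.reindex_bij_witness[where j = "\<lambda>p. (fst p / snd p, (u + v * fst p) / (u + v * snd p))"
        and i = "\<lambda>p. (fst p * (u * (snd p - 1) / (v * (fst p - snd p))), u * (snd p - 1) / (v * (fst p - snd p)))"])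
    fix a assume a: "a \<in> T \<times> T - Dia"
    obtain s t where st: "a = (s, t)" by (cases a)
    have h: "s \<noteq> 0" "t \<noteq> 0" "u + v * s \<noteq> 0" "u + v * t \<noteq> 0" "s \<noteq> t"
      using a by (auto simp: st Tmem Dia_def)
    note b = bij1[OF u v h]
    show "(fst (fst a / snd a, (u + v * fst a) / (u + v * snd a)) *
         (u * (snd (fst a / snd a, (u + v * fst a) / (u + v * snd a)) - 1) /
          (v * (fst (fst a / snd a, (u + v * fst a) / (u + v * snd a)) -
                snd (fst a / snd a, (u + v * fst a) / (u + v * snd a))))),
         u * (snd (fst a / snd a, (u + v * fst a) / (u + v * snd a)) - 1) /
         (v * (fst (fst a / snd a, (u + v * fst a) / (u + v * snd a)) -
               snd (fst a / snd a, (u + v * fst a) / (u + v * snd a))))) = a"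
      using b by (simp add: st)
    show "(fst a / snd a, (u + v * fst a) / (u + v * snd a)) \<in> V"
      using b by (simp add: st V_def G_def)
    show "k (fst a / snd a, (u + v * fst a) / (u + v * snd a)) = h a"
      by (simp add: k_def h_def)
  next
    fix b assume b: "b \<in> V"
    obtain x y where xy: "b = (x, y)" by (cases b)
    have h: "x \<noteq> 0" "x \<noteq> 1" "y \<noteq> 0" "y \<noteq> 1" "x \<noteq> y"
      using b by (auto simp: xy V_def G_def)
    note c = bij2[OF u v h]
    show "(fst (fst b * (u * (snd b - 1) / (v * (fst b - snd b))), u * (snd b - 1) / (v * (fst b - snd b))) /
         snd (fst b * (u * (snd b - 1) / (v * (fst b - snd b))), u * (snd b - 1) / (v * (fst b - snd b))),
         (u + v * fst (fst b * (u * (snd b - 1) / (v * (fst b - snd b))), u * (snd b - 1) / (v * (fst b - snd b)))) /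
         (u + v * snd (fst b * (u * (snd b - 1) / (v * (fst b - snd b))), u * (snd b - 1) / (v * (fst b - snd b))))) = b"
      using c by (simp add: xy)
    have mem: "\<And>a b. a \<noteq> 0 \<Longrightarrow> u + v*a \<noteq> 0 \<Longrightarrow> b \<noteq> 0 \<Longrightarrow> u + v*b \<noteq> 0 \<Longrightarrow> a \<noteq> b \<Longrightarrow> (a, b) \<in> T \<times> T - Dia"
      by (auto simp: Tmem Dia_def)
    show "(fst b * (u * (snd b - 1) / (v * (fst b - snd b))), u * (snd b - 1) / (v * (fst b - snd b))) \<in> T \<times> T - Dia"
      unfolding xy fst_conv snd_conv by (rule mem[OF c(2) c(4) c(1) c(3) c(5)])
  qed
  also have "(\<Sum>p\<in>V. k p) = (\<Sum>p\<in>G \<times> G. k p) - (\<Sum>p\<in>(\<lambda>x. (x, x)) ` G. k p)"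
  proof -
    have "V = (G \<times> G) - (\<lambda>x. (x, x)) ` G" by (auto simp: V_def)
    moreover have "(\<Sum>p\<in>G \<times> G. k p) = (\<Sum>p\<in>(G \<times> G) - (\<lambda>x. (x, x)) ` G. k p) + (\<Sum>p\<in>(\<lambda>x. (x, x)) ` G. k p)"
      by (rule sum.subset_diff) auto
    ultimately show ?thesis by simp
  qed
  also have "(\<Sum>p\<in>G \<times> G. k p) = of_real (rs B) * of_real (rs C)"
  proof -
    have "(\<Sum>p\<in>G \<times> G. k p) = (\<Sum>x\<in>G. \<Sum>y\<in>G. chi B x * chi C y)"
      by (simp add: k_def sum.cartesian_product case_prod_beta)
    also have "\<dots> = (\<Sum>x\<in>G. chi B x) * (\<Sum>y\<in>G. chi C y)" by (simp add: sum_product)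
    finally show ?thesis by (simp only: sG)
  qed
  also have "(\<Sum>p\<in>(\<lambda>x. (x, x)) ` G. k p) = of_real (rs (B + C))"
  proof -
    have "(\<Sum>p\<in>(\<lambda>x. (x, x)) ` G. k p) = (\<Sum>x\<in>G. chi (B + C) x)"
      by (subst sum.reindex) (auto simp: inj_on_def k_def chi_add)
    then show ?thesis by (simp add: sG)
  qed
  finally have eq: "of_real ((cmod (Jt u v B C))^2) =
      (of_real (rs B * rs C - rs (B + C) + real (card T)) :: complex)" by simp
  then have eqr: "(cmod (Jt u v B C))^2 = rs B * rs C - rs (B + C) + real (card T)"
    using of_real_eq_iff by blast
  have cT: "real (card T) = real m - 1" using card_Tset[OF u v] m_def m_pos
    unfolding T_def by (simp add: of_nat_diff)
  have q: "real CARD('a) = real m + 1" using m_def m_pos by simp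
  have rsge: "rs n \<ge> -1" for n by (simp add: rs_def)
  show ?thesis
  proof (cases "int m dvd B")
    case True
    then have "\<not> int m dvd C" "\<not> int m dvd (B + C)" using nd by (auto simp: dvd_add_right_iff)
    then show ?thesis using eqr cT q True m_pos by (simp add: rs_def)
  next
    case False
    show ?thesis
    proof (cases "int m dvd C")
      case True
      then have "\<not> int m dvd (B + C)" using False by (auto simp: dvd_add_left_iff)
      then show ?thesis using eqr cT q True False m_pos by (simp add: rs_def)
    next
      case False2: False
      then show ?thesis using eqr cT q False rsge[of "B + C"] by (simp add: rs_def)
    qed
  qed
qed

end


lemma prod4_sum:
  fixes f1 f2 f3 f4 :: "'b \<Rightarrow> complex"
  shows "(\<Sum>x\<in>A. f1 x) * (\<Sum>x\<in>A. f2 x) * (\<Sum>x\<in>A. f3 x) * (\<Sum>x\<in>A. f4 x)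
    = (\<Sum>q\<in>A \<times> A \<times> A \<times> A. f1 (snd (snd (snd q))) * f2 (fst (snd (snd q))) * f3 (fst (snd q)) * f4 (fst q))"
proof -
  have r: "(\<Sum>q\<in>A \<times> A \<times> A \<times> A. f1 (snd (snd (snd q))) * f2 (fst (snd (snd q))) * f3 (fst (snd q)) * f4 (fst q))
     = (\<Sum>s\<in>A. \<Sum>z\<in>A. \<Sum>y\<in>A. \<Sum>x\<in>A. f1 x * f2 y * f3 z * f4 s)"
    by (simp add: sum.cartesian_product case_prod_beta)
  have l: "(\<Sum>x\<in>A. f1 x) * (\<Sum>x\<in>A. f2 x) * (\<Sum>x\<in>A. f3 x) * (\<Sum>x\<in>A. f4 x)
     = (\<Sum>s\<in>A. \<Sum>z\<in>A. \<Sum>y\<in>A. \<Sum>x\<in>A. f1 x * f2 y * f3 z * f4 s)"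
    by (simp add: sum_distrib_left sum_distrib_right)
  show ?thesis unfolding l r ..
qed

context gsetup
begin

lemma S_eval:
  assumes u: "u \<noteq> 0" and v: "v \<noteq> 0"
  shows "(\<Sum>p\<in>{p \<in> (UNIV - {0}) \<times> (UNIV - {0}). u * fst p + v * snd p \<noteq> 0}.
           chi n1 (fst p) * chi n2 (snd p) * chi n3 (u * fst p + v * snd p)
             * chi n4 ((u * fst p + v * snd p) / (fst p * snd p)))
       = (if int m dvd (n1 + n2 + n3 - n4) then of_nat m else 0) * Jt u v (n2 - n4) (n3 + n4)"
proof -
  define X where "X p = chi n1 (fst p) * chi n2 (snd p) * chi n3 (u * fst p + v * snd p)
             * chi n4 ((u * fst p + v * snd p) / (fst p * snd p))" for p
  define Z where "Z = {p \<in> (UNIV - {0}) \<times> (UNIV - {0}). u * fst p + v * snd p \<noteq> (0::'a)}"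
  define T where "T = Tset u v"
  have Tmem: "t \<in> T \<longleftrightarrow> t \<noteq> 0 \<and> u + v * t \<noteq> 0" for t by (simp add: T_def Tset_def)
  have "(\<Sum>p\<in>Z. X p) = (\<Sum>p\<in>(UNIV - {0::'a}) \<times> T. X (fst p, fst p * snd p))"
  proof (rule sum.reindex_bij_witness[symmetric, where j = "\<lambda>p::'a\<times>'a. (fst p, fst p * snd p)"
        and i = "\<lambda>p::'a\<times>'a. (fst p, snd p / fst p)"])
    fix a :: "'a \<times> 'a" assume a: "a \<in> (UNIV - {0::'a}) \<times> T"
    then show "(fst (fst a, fst a * snd a), snd (fst a, fst a * snd a) / fst (fst a, fst a * snd a)) = a"
      by (cases a) auto
    have e: "u * fst a + v * (fst a * snd a) = fst a * (u + v * snd a)" by (simp add: algebra_simps)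
    show "(fst a, fst a * snd a) \<in> Z" using a unfolding Z_def by (auto simp: Tmem e)
  next
    fix b :: "'a \<times> 'a" assume b: "b \<in> Z"
    then show "(fst (fst b, snd b / fst b), fst (fst b, snd b / fst b) * snd (fst b, snd b / fst b)) = b"
      by (cases b) (auto simp: Z_def)
    have "fst b \<noteq> 0" "snd b \<noteq> 0" "u * fst b + v * snd b \<noteq> 0" using b by (auto simp: Z_def)
    moreover have "u + v * (snd b / fst b) = (u * fst b + v * snd b) / fst b"
      using \<open>fst b \<noteq> 0\<close> by (simp add: field_simps)
    ultimately show "(fst b, snd b / fst b) \<in> (UNIV - {0::'a}) \<times> T" by (simp add: Tmem)
  qed simp
  also have "\<dots> = (\<Sum>p\<in>(UNIV - {0::'a}) \<times> T. chi (n1 + n2 + n3 - n4) (fst p) * (chi (n2 - n4) (snd p) * chi (n3 + n4) (u + v * snd p)))"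
  proof (intro sum.cong refl)
    fix p :: "'a \<times> 'a" assume p: "p \<in> (UNIV - {0::'a}) \<times> T"
    obtain a t where at: "p = (a, t)" by (cases p)
    have h: "a \<noteq> 0" "t \<noteq> 0" "u + v * t \<noteq> 0" using p by (auto simp: at Tmem)
    have e1: "u * a + v * (a * t) = a * (u + v * t)" by (simp add: algebra_simps)
    have e2: "a * (u + v * t) / (a * (a * t)) = (u + v * t) / (a * t)" using h by simp
    have c1: "chi (n1 + n2 + n3 - n4) a = chi n1 a * chi n2 a * chi n3 a * chi (- n4) a"
      by (simp only: diff_conv_add_uminus chi_add)
    have c2: "chi (n2 - n4) t = chi n2 t * chi (- n4) t"
      by (simp only: diff_conv_add_uminus chi_add)
    have c3: "chi (n3 + n4) (u + v * t) = chi n3 (u + v * t) * chi n4 (u + v * t)"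
      by (simp only: chi_add)
    have X: "X (a, a * t) = chi n1 a * (chi n2 a * chi n2 t) * (chi n3 a * chi n3 (u + v * t))
        * (chi n4 (u + v * t) * (chi (- n4) a * chi (- n4) t))"
      unfolding X_def fst_conv snd_conv e1 e2 using h
      by (simp add: chi_mult chi_div chi_neg mult_ac)
    show "X (fst p, fst p * snd p) = chi (n1 + n2 + n3 - n4) (fst p) * (chi (n2 - n4) (snd p) * chi (n3 + n4) (u + v * snd p))"
      unfolding at fst_conv snd_conv X c1 c2 c3 by (simp only: mult_ac)
  qed
  also have "\<dots> = (\<Sum>a\<in>UNIV - {0}. chi (n1 + n2 + n3 - n4) a) * (\<Sum>t\<in>T. chi (n2 - n4) t * chi (n3 + n4) (u + v * t))"
    by (simp add: sum_product sum.cartesian_product case_prod_beta)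
  also have "\<dots> = (if int m dvd (n1 + n2 + n3 - n4) then of_nat m else 0) * Jt u v (n2 - n4) (n3 + n4)"
    by (simp add: chi_sum Jt_def T_def)
  finally show ?thesis by (simp add: X_def Z_def)
qed

end


context gsetup
begin

definition T4 where "T4 = Tup \<times> Tup \<times> Tup \<times> Tup"
definition q1 :: "(nat \<Rightarrow> nat) \<times> (nat \<Rightarrow> nat) \<times> (nat \<Rightarrow> nat) \<times> (nat \<Rightarrow> nat) \<Rightarrow> nat \<Rightarrow> nat"
  where "q1 q = snd (snd (snd q))"
definition q2 :: "(nat \<Rightarrow> nat) \<times> (nat \<Rightarrow> nat) \<times> (nat \<Rightarrow> nat) \<times> (nat \<Rightarrow> nat) \<Rightarrow> nat \<Rightarrow> nat"
  where "q2 q = fst (snd (snd q))"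
definition q3 :: "(nat \<Rightarrow> nat) \<times> (nat \<Rightarrow> nat) \<times> (nat \<Rightarrow> nat) \<times> (nat \<Rightarrow> nat) \<Rightarrow> nat \<Rightarrow> nat"
  where "q3 q = fst (snd q)"
definition q4 :: "(nat \<Rightarrow> nat) \<times> (nat \<Rightarrow> nat) \<times> (nat \<Rightarrow> nat) \<times> (nat \<Rightarrow> nat) \<Rightarrow> nat \<Rightarrow> nat"
  where "q4 q = fst q"
definition Wq where "Wq q = w (q1 q) * w (q2 q) * w (q3 q) * w (q4 q)"
definition condq where
  "condq q \<longleftrightarrow> int m dvd (int (sig (q1 q)) + int (sig (q2 q)) + int (sig (q3 q)) - int (sig (q4 q)))"
definition Jq where
  "Jq u v q = Jt u v (int (sig (q2 q)) - int (sig (q4 q))) (int (sig (q3 q)) + int (sig (q4 q)))"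

lemma N_expand:
  assumes u: "u \<noteq> 0" and v: "v \<noteq> 0"
  shows "(of_nat (N_uv u v) :: complex) = (\<Sum>q\<in>T4. of_real (Wq q) * ((if condq q then of_nat m else 0) * Jq u v q))"
proof -
  define Z where "Z = {p \<in> (UNIV - {0}) \<times> (UNIV - {0}). u * fst p + v * snd p \<noteq> (0::'a)}"
  define I where "I x = (of_bool (primitive_elem x) :: complex)" for x :: 'a
  define X where "X q p = chi (int (sig (q1 q))) (fst p) * chi (int (sig (q2 q))) (snd p)
      * chi (int (sig (q3 q))) (u * fst p + v * snd p)
      * chi (int (sig (q4 q))) ((u * fst p + v * snd p) / (fst p * snd p))" for q and p :: "'a \<times> 'a"
  have set: "{(a, b). uv_primitive u v a b} = Z \<inter> {p. uv_primitive u v (fst p) (snd p)}"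
    by (auto simp: Z_def uv_primitive_def primitive_elem_def)
  have "(of_nat (N_uv u v) :: complex) = (\<Sum>p\<in>Z. of_bool (uv_primitive u v (fst p) (snd p)))"
    unfolding N_uv_def set by simp
  also have "\<dots> = (\<Sum>p\<in>Z. I (fst p) * I (snd p) * I (u * fst p + v * snd p) * I ((u * fst p + v * snd p) / (fst p * snd p)))"
  proof (intro sum.cong refl)
    fix p assume "p \<in> Z"
    then have "fst p \<noteq> 0" "snd p \<noteq> 0" by (auto simp: Z_def)
    then have "v * inverse (fst p) + u * inverse (snd p) = (u * fst p + v * snd p) / (fst p * snd p)"
      by (simp add: field_simps)
    then show "of_bool (uv_primitive u v (fst p) (snd p)) = I (fst p) * I (snd p) * I (u * fst p + v * snd p) * I ((u * fst p + v * snd p) / (fst p * snd p))"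
      by (simp add: uv_primitive_def I_def)
  qed
  also have "\<dots> = (\<Sum>p\<in>Z. \<Sum>q\<in>T4. of_real (Wq q) * X q p)"
  proof (intro sum.cong refl)
    fix p assume "p \<in> Z"
    then have nz: "fst p \<noteq> 0" "snd p \<noteq> 0" "u * fst p + v * snd p \<noteq> 0"
      "(u * fst p + v * snd p) / (fst p * snd p) \<noteq> 0" by (auto simp: Z_def)
    have "I (fst p) * I (snd p) * I (u * fst p + v * snd p) * I ((u * fst p + v * snd p) / (fst p * snd p))
      = (\<Sum>t\<in>Tup. of_real (w t) * chi (int (sig t)) (fst p)) * (\<Sum>t\<in>Tup. of_real (w t) * chi (int (sig t)) (snd p))
        * (\<Sum>t\<in>Tup. of_real (w t) * chi (int (sig t)) (u * fst p + v * snd p))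
        * (\<Sum>t\<in>Tup. of_real (w t) * chi (int (sig t)) ((u * fst p + v * snd p) / (fst p * snd p)))"
      unfolding I_def indicator[OF nz(1)] indicator[OF nz(2)] indicator[OF nz(3)] indicator[OF nz(4)] ..
    also have "\<dots> = (\<Sum>q\<in>T4. of_real (Wq q) * X q p)"
      unfolding prod4_sum T4_def
      by (intro sum.cong refl) (simp add: Wq_def X_def q1_def q2_def q3_def q4_def mult_ac)
    finally show "I (fst p) * I (snd p) * I (u * fst p + v * snd p) * I ((u * fst p + v * snd p) / (fst p * snd p))
      = (\<Sum>q\<in>T4. of_real (Wq q) * X q p)" .
  qed
  also have "\<dots> = (\<Sum>q\<in>T4. of_real (Wq q) * (\<Sum>p\<in>Z. X q p))"
    by (subst sum.swap) (simp add: sum_distrib_left)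
  also have "\<dots> = (\<Sum>q\<in>T4. of_real (Wq q) * ((if condq q then of_nat m else 0) * Jq u v q))"
    by (intro sum.cong refl) (simp add: X_def Z_def S_eval[OF u v] condq_def Jq_def)
  finally show ?thesis .
qed

end


context gsetup
begin

definition dg where "dg t = (t, neg t, t, t)"
definition Dg where "Dg = dg ` Tup"

lemma Dg_sub: "Dg \<subseteq> T4"
  by (auto simp: Dg_def dg_def T4_def neg_Tup)

lemma finite_T4: "finite T4" by (simp add: T4_def finite_Tup)

lemma dg_q: "q1 (dg t) = t" "q2 (dg t) = t" "q3 (dg t) = neg t" "q4 (dg t) = t"
  by (simp_all add: dg_def q1_def q2_def q3_def q4_def)

lemma Dg_cond: "q \<in> Dg \<Longrightarrow> condq q"
proof -
  assume "q \<in> Dg"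
  then obtain t where t: "t \<in> Tup" "q = dg t" by (auto simp: Dg_def)
  have "int (sig t) + int (sig t) + int (sig (neg t)) - int (sig t) = int (sig t) + int (sig (neg t))"
    by simp
  then show "condq q" unfolding condq_def t(2) dg_q using sig_neg[OF t(1)] by simp
qed

lemma Dg_J:
  assumes "u \<noteq> 0" "v \<noteq> 0" "q \<in> Dg"
  shows "Jq u v q = of_nat (CARD('a) - 2)"
proof -
  obtain t where t: "t \<in> Tup" "q = dg t" using assms(3) by (auto simp: Dg_def)
  have "int m dvd int (sig (neg t)) + int (sig t)" using sig_neg[OF t(1)] by (simp add: add.commute)
  then show ?thesis unfolding Jq_def t(2) dg_q using assms by (intro J_triv) auto
qed

lemma nondiag:
  assumes q: "q \<in> T4" and c: "condq q" and nd: "q \<notin> Dg"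
  shows "\<not> (int m dvd (int (sig (q2 q)) - int (sig (q4 q))) \<and> int m dvd (int (sig (q3 q)) + int (sig (q4 q))))"
proof
  assume h: "int m dvd (int (sig (q2 q)) - int (sig (q4 q))) \<and> int m dvd (int (sig (q3 q)) + int (sig (q4 q)))"
  have mem: "q1 q \<in> Tup" "q2 q \<in> Tup" "q3 q \<in> Tup" "q4 q \<in> Tup"
    using q by (auto simp: T4_def q1_def q2_def q3_def q4_def)
  have e2: "q2 q = q4 q" using sig_inj[OF mem(2) mem(4)] h by simp
  have "int m dvd (int (sig (q3 q)) + int (sig (q4 q))) - (int (sig (q4 q)) + int (sig (neg (q4 q))))"
    using dvd_diff[OF conjunct2[OF h] sig_neg[OF mem(4)]] .
  then have "int m dvd int (sig (q3 q)) - int (sig (neg (q4 q)))" by simp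
  then have e3: "q3 q = neg (q4 q)" using sig_inj[OF mem(3) neg_Tup[OF mem(4)]] by simp
  have "int m dvd (int (sig (q1 q)) + int (sig (q2 q)) + int (sig (q3 q)) - int (sig (q4 q)))
     - (int (sig (q2 q)) - int (sig (q4 q))) - (int (sig (q3 q)) + int (sig (q4 q)))"
    using dvd_diff[OF dvd_diff[OF c[unfolded condq_def] conjunct1[OF h]] conjunct2[OF h]] .
  then have "int m dvd int (sig (q1 q)) - int (sig (q4 q))" by (simp add: algebra_simps)
  then have e1: "q1 q = q4 q" using sig_inj[OF mem(1) mem(4)] by simp
  have "q = dg (q4 q)"
    using e1 e2 e3 by (cases q) (auto simp: dg_def q1_def q2_def q3_def q4_def)
  then have "q \<in> Dg" using mem(4) by (auto simp: Dg_def)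
  then show False using nd by simp
qed

lemma Wq_dg: "t \<in> Tup \<Longrightarrow> Wq (dg t) = (w t) ^ 4"
  by (simp add: Wq_def dg_q w_neg power4_eq_xxxx)

lemma sum_Dg: "(\<Sum>q\<in>Dg. Wq q) = th ^ 3 * tau_nat m"
proof -
  have "inj_on dg Tup" by (auto simp: inj_on_def dg_def)
  then have "(\<Sum>q\<in>Dg. Wq q) = (\<Sum>t\<in>Tup. Wq (dg t))" unfolding Dg_def by (simp add: sum.reindex)
  also have "\<dots> = (\<Sum>t\<in>Tup. (w t) ^ 4)" by (intro sum.cong refl Wq_dg)
  finally show ?thesis using sum_w4 by simp
qed

lemma inner_bound: "(\<Sum>t\<in>Tup. \<bar>w t\<bar> * of_bool (int m dvd int (sig t) + K)) \<le> th"
proof -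
  define A where "A = {t \<in> Tup. int m dvd int (sig t) + K}"
  have "(\<Sum>t\<in>Tup. \<bar>w t\<bar> * of_bool (int m dvd int (sig t) + K)) = (\<Sum>t\<in>A. \<bar>w t\<bar>)"
  proof -
    have "(\<Sum>t\<in>Tup. \<bar>w t\<bar> * of_bool (int m dvd int (sig t) + K))
        = (\<Sum>t\<in>Tup. if int m dvd int (sig t) + K then \<bar>w t\<bar> else 0)"
      by (intro sum.cong refl) simp
    also have "\<dots> = (\<Sum>t\<in>A. \<bar>w t\<bar>)"
      unfolding A_def by (rule sum.inter_filter[OF finite_Tup, symmetric])
    finally show ?thesis .
  qed
  also have "\<dots> \<le> th"
  proof (cases "A = {}")
    case True then show ?thesis using th_nonneg by simp
  next
    case False
    then obtain t0 where t0: "t0 \<in> A" by blast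
    have "A = {t0}"
    proof
      show "A \<subseteq> {t0}"
      proof
        fix t assume t: "t \<in> A"
        have "int m dvd (int (sig t) + K) - (int (sig t0) + K)"
          using t t0 unfolding A_def by (intro dvd_diff) auto
        then have "int m dvd int (sig t) - int (sig t0)" by simp
        then show "t \<in> {t0}" using sig_inj t t0 unfolding A_def by auto
      qed
    qed (use t0 in auto)
    moreover have "t0 \<in> Tup" using t0 by (simp add: A_def)
    ultimately show ?thesis using abs_w_le by simp
  qed
  finally show ?thesis .
qed

lemma sum_T4_split:
  "(\<Sum>q\<in>T4. f q) = (\<Sum>a\<in>Tup. \<Sum>b\<in>Tup. \<Sum>c\<in>Tup. \<Sum>d\<in>Tup. f (a, b, c, d))"
  by (simp add: T4_def sum.cartesian_product)

lemma SA_bound: "(\<Sum>q\<in>T4. \<bar>Wq q\<bar> * of_bool (condq q)) \<le> th ^ 4 * (2 ^ card P) ^ 3"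
proof -
  define S where "S = (\<Sum>t\<in>Tup. \<bar>w t\<bar>)"
  have "(\<Sum>q\<in>T4. \<bar>Wq q\<bar> * of_bool (condq q))
      = (\<Sum>a\<in>Tup. \<Sum>b\<in>Tup. \<Sum>c\<in>Tup. \<bar>w a\<bar> * \<bar>w b\<bar> * \<bar>w c\<bar> *
          (\<Sum>d\<in>Tup. \<bar>w d\<bar> * of_bool (int m dvd int (sig d) + (int (sig c) + int (sig b) - int (sig a)))))"
    unfolding sum_T4_split
  proof (intro sum.cong refl)
    fix a b c assume "a \<in> Tup" "b \<in> Tup" "c \<in> Tup"
    have "\<bar>Wq (a, b, c, d)\<bar> * of_bool (condq (a, b, c, d))
        = \<bar>w a\<bar> * \<bar>w b\<bar> * \<bar>w c\<bar> * (\<bar>w d\<bar> * of_bool (int m dvd int (sig d) + (int (sig c) + int (sig b) - int (sig a))))" for d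
    proof -
      have "int (sig d) + int (sig c) + int (sig b) - int (sig a) = int (sig d) + (int (sig c) + int (sig b) - int (sig a))"
        by simp
      then show ?thesis
        unfolding Wq_def condq_def q1_def q2_def q3_def q4_def fst_conv snd_conv abs_mult
        by (simp only: mult_ac)
    qed
    then show "(\<Sum>d\<in>Tup. \<bar>Wq (a, b, c, d)\<bar> * of_bool (condq (a, b, c, d)))
      = \<bar>w a\<bar> * \<bar>w b\<bar> * \<bar>w c\<bar> * (\<Sum>d\<in>Tup. \<bar>w d\<bar> * of_bool (int m dvd int (sig d) + (int (sig c) + int (sig b) - int (sig a))))"
      by (simp add: sum_distrib_left)
  qed
  also have "\<dots> \<le> (\<Sum>a\<in>Tup. \<Sum>b\<in>Tup. \<Sum>c\<in>Tup. \<bar>w a\<bar> * \<bar>w b\<bar> * \<bar>w c\<bar> * th)"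
    by (intro sum_mono mult_left_mono inner_bound) auto
  also have "\<dots> = th * S ^ 3"
    by (simp add: S_def sum_distrib_left sum_distrib_right power3_eq_cube mult_ac)
  also have "\<dots> = th ^ 4 * (2 ^ card P) ^ 3"
    by (simp add: S_def sum_abs_w power_mult_distrib power4_eq_xxxx power3_eq_cube)
  finally show ?thesis .
qed

end


context gsetup
begin

lemma card_P_pos:
  assumes "CARD('a) > 2"
  shows "card P \<ge> 1"
proof -
  have "m \<noteq> 1" using assms m_def by simp
  then obtain p where "prime p" "p dvd m" using prime_factor_nat by blast
  then have "p \<in> P" using m_pos by (simp add: in_prime_factors_iff)
  then have "P \<noteq> {}" by blast
  then show ?thesis by (simp add: Suc_le_eq card_gt_0_iff)
qed

lemma D_bound:
  assumes "CARD('a) > 2"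
  shows "th ^ 3 * tau_nat m \<le> th ^ 4 * (2 ^ card P) ^ 3 / 4"
proof -
  have "(\<Sum>t\<in>Tup. (w t) ^ 4) \<le> (\<Sum>t\<in>Tup. th ^ 3 * \<bar>w t\<bar>)"
  proof (intro sum_mono)
    fix t assume t: "t \<in> Tup"
    have "(w t) ^ 4 = \<bar>w t\<bar> ^ 3 * \<bar>w t\<bar>" by (simp add: power4_eq_xxxx power3_eq_cube abs_mult_self_eq flip: abs_mult)
    also have "\<dots> \<le> th ^ 3 * \<bar>w t\<bar>"
      by (intro mult_right_mono power_mono abs_w_le[OF t]) auto
    finally show "(w t) ^ 4 \<le> th ^ 3 * \<bar>w t\<bar>" .
  qed
  also have "\<dots> = th ^ 4 * 2 ^ card P" by (simp add: sum_distrib_left[symmetric] sum_abs_w power4_eq_xxxx power3_eq_cube)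
  also have "\<dots> \<le> th ^ 4 * (2 ^ card P) ^ 3 / 4"
  proof -
    have "(2::real) ^ card P \<ge> 2" using card_P_pos[OF assms]
      by (metis power_one_right power_increasing one_le_numeral)
    then have "(2::real) ^ card P \<le> (2 ^ card P) ^ 3 / 4"
    proof -
      assume W2: "(2::real) ^ card P \<ge> 2"
      define W :: real where "W = 2 ^ card P"
      have "4 \<le> W * W" using mult_mono[OF W2 W2] by (simp add: W_def)
      then have "W * 4 \<le> W * (W * W)" using W2 by (intro mult_left_mono) (auto simp: W_def)
      then show ?thesis by (simp add: W_def power3_eq_cube)
    qed
    then have "th ^ 4 * 2 ^ card P \<le> th ^ 4 * ((2 ^ card P) ^ 3 / 4)"
      by (rule mult_left_mono) (simp add: th_nonneg)
    then show ?thesis by simp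
  qed
  finally show ?thesis using sum_w4 by simp
qed

lemma main_bound:
  fixes u v :: 'a
  assumes u: "u \<noteq> 0" and v: "v \<noteq> 0" and q2: "CARD('a) > 2"
  shows "\<bar>real (N_uv u v) - th ^ 3 * tau_nat m * real m * real CARD('a)\<bar>
      \<le> th ^ 4 * (2 ^ card P) ^ 3 * real m * sqrt (real CARD('a))"
proof -
  define q where "q = real CARD('a)"
  define mr where "mr = real m"
  define M where "M = th ^ 4 * (2 ^ card P) ^ 3"
  define D where "D = th ^ 3 * tau_nat m"
  define cJ where "cJ = min (sqrt q) (q - 2)"
  define E where "E x = (if condq x then of_nat m else 0) * Jq u v x - of_bool (x \<in> Dg) * complex_of_real (mr * q)" for x
  define SD where "SD = (\<Sum>x\<in>T4. \<bar>Wq x\<bar> * of_bool (x \<in> Dg))"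
  define SA where "SA = (\<Sum>x\<in>T4. \<bar>Wq x\<bar> * of_bool (condq x))"
  define SN where "SN = (\<Sum>x\<in>T4. \<bar>Wq x\<bar> * of_bool (condq x \<and> x \<notin> Dg))"
  have qm: "q = mr + 1" using m_def q2 by (simp add: q_def mr_def)
  have mr0: "mr \<ge> 0" by (simp add: mr_def)
  have Dg_T4: "{x \<in> T4. x \<in> Dg} = Dg" using Dg_sub by auto
  have sumDg: "(\<Sum>x\<in>T4. f x * of_bool (x \<in> Dg)) = (\<Sum>x\<in>Dg. f x)" for f :: "_ \<Rightarrow> 'b::comm_ring_1"
  proof -
    have "(\<Sum>x\<in>T4. f x * of_bool (x \<in> Dg)) = (\<Sum>x\<in>T4. if x \<in> Dg then f x else 0)"
      by (intro sum.cong refl) simp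
    also have "\<dots> = (\<Sum>x\<in>{x \<in> T4. x \<in> Dg}. f x)" by (rule sum.inter_filter[OF finite_T4, symmetric])
    finally show ?thesis using Dg_T4 by simp
  qed
  have WDg: "Wq x \<ge> 0" if "x \<in> Dg" for x
    using that by (auto simp: Dg_def Wq_dg)
  have SD_D: "SD = D"
  proof -
    have "SD = (\<Sum>x\<in>Dg. \<bar>Wq x\<bar>)" unfolding SD_def by (rule sumDg)
    also have "\<dots> = (\<Sum>x\<in>Dg. Wq x)" using WDg by (intro sum.cong refl) simp
    finally show ?thesis using sum_Dg by (simp add: D_def)
  qed
  have SN_eq: "SN = SA - SD"
  proof -
    have "SA = (\<Sum>x\<in>T4. \<bar>Wq x\<bar> * of_bool (x \<in> Dg) + \<bar>Wq x\<bar> * of_bool (condq x \<and> x \<notin> Dg))"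
      unfolding SA_def using Dg_cond by (intro sum.cong refl) auto
    then show ?thesis by (simp add: sum.distrib SD_def SN_def)
  qed
  have SD0: "SD \<ge> 0" "SN \<ge> 0" unfolding SD_def SN_def by (auto intro: sum_nonneg)
  have SAM: "SA \<le> M" unfolding SA_def M_def by (rule SA_bound)
  have DM: "D \<le> M / 4" unfolding D_def M_def by (rule D_bound[OF q2])
  have diff: "complex_of_real (real (N_uv u v) - D * mr * q) = (\<Sum>x\<in>T4. of_real (Wq x) * E x)"
  proof -
    have "complex_of_real (D * mr * q) = (\<Sum>x\<in>T4. of_real (Wq x) * (of_bool (x \<in> Dg) * complex_of_real (mr * q)))"
    proof -
      have "(\<Sum>x\<in>T4. of_real (Wq x) * (of_bool (x \<in> Dg) * complex_of_real (mr * q)))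
          = (\<Sum>x\<in>T4. of_real (Wq x) * of_bool (x \<in> Dg)) * complex_of_real (mr * q)"
        unfolding sum_distrib_right by (simp only: mult.assoc)
      also have "(\<Sum>x\<in>T4. of_real (Wq x) * of_bool (x \<in> Dg)) = (\<Sum>x\<in>Dg. complex_of_real (Wq x))"
        by (rule sumDg)
      also have "\<dots> = of_real D" using sum_Dg by (simp add: D_def flip: of_real_sum)
      finally show ?thesis by (simp add: mult_ac)
    qed
    then show ?thesis
      using N_expand[OF u v] by (simp add: E_def sum_subtractf right_diff_distrib)
  qed
  have Ebound: "cmod (E x) \<le> mr * (2 * of_bool (x \<in> Dg) + cJ * of_bool (condq x \<and> x \<notin> Dg))" if x: "x \<in> T4" for x
  proof (cases "x \<in> Dg")
    case True
    then have "E x = of_nat m * of_nat (CARD('a) - 2) - complex_of_real (mr * q)"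
      using Dg_cond Dg_J[OF u v] by (simp add: E_def)
    also have "\<dots> = complex_of_real (- 2 * mr)"
    proof -
      have cm: "CARD('a) - 2 = m - 1" using m_def by simp
      have c1: "(of_nat (CARD('a) - 2) :: complex) = of_nat m - 1" unfolding cm using m_pos by (simp add: of_nat_diff)
      have c2: "complex_of_real (mr * q) = of_nat m * (of_nat m + 1)" using qm by (simp add: mr_def)
      show ?thesis unfolding c1 c2 by (simp add: mr_def algebra_simps)
    qed
    finally show ?thesis using True mr0 by simp
  next
    case False
    show ?thesis
    proof (cases "condq x")
      case True
      have nd: "\<not> (int m dvd (int (sig (q2 x)) - int (sig (q4 x))) \<and> int m dvd (int (sig (q3 x)) + int (sig (q4 x))))"
        by (rule nondiag[OF x True False])
      have j1: "cmod (Jq u v x) \<le> sqrt q"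
        using J_sq[OF u v nd] unfolding Jq_def q_def by (simp add: real_le_rsqrt)
      have j2: "cmod (Jq u v x) \<le> q - 2"
        using J_le[OF u v] q2 unfolding Jq_def q_def by (simp add: of_nat_diff)
      have "cmod (E x) = mr * cmod (Jq u v x)" using True False by (simp add: E_def norm_mult mr_def)
      also have "\<dots> \<le> mr * cJ" using j1 j2 mr0 unfolding cJ_def by (intro mult_left_mono) auto
      finally show ?thesis using True False by simp
    next
      case False2: False
      then show ?thesis using False mr0 by (simp add: E_def)
    qed
  qed
  have "\<bar>real (N_uv u v) - D * mr * q\<bar> = cmod (\<Sum>x\<in>T4. of_real (Wq x) * E x)"
    by (metis diff norm_of_real)
  also have "\<dots> \<le> (\<Sum>x\<in>T4. \<bar>Wq x\<bar> * cmod (E x))"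
    by (rule order_trans[OF norm_sum]) (simp add: norm_mult)
  also have "\<dots> \<le> (\<Sum>x\<in>T4. \<bar>Wq x\<bar> * (mr * (2 * of_bool (x \<in> Dg) + cJ * of_bool (condq x \<and> x \<notin> Dg))))"
    by (intro sum_mono mult_left_mono Ebound) auto
  also have "\<dots> = mr * (2 * SD + cJ * SN)"
    by (simp add: SD_def SN_def sum_distrib_left algebra_simps sum.distrib)
  also have "\<dots> \<le> mr * (M * sqrt q)"
  proof (intro mult_left_mono mr0)
    show "2 * SD + cJ * SN \<le> M * sqrt q"
    proof (cases "CARD('a) = 3")
      case True
      then have "q = 3" by (simp add: q_def)
      then have c1: "cJ = 1" by (simp add: cJ_def min_def)
      have "(5/4::real) \<le> sqrt 3" by (rule real_le_rsqrt) (simp add: power2_eq_square)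
      moreover have "M \<ge> 0" using DM SD_D SD0 by linarith
      ultimately have "M * (5/4) \<le> M * sqrt q" using \<open>q = 3\<close> by (intro mult_left_mono) auto
      then show ?thesis unfolding c1 using SN_eq SD_D DM SAM by linarith
    next
      case False
      then have "q \<ge> 4" using q2 by (simp add: q_def)
      then have s2: "sqrt q \<ge> 2" by (simp add: real_le_rsqrt)
      have "cJ \<le> sqrt q" by (simp add: cJ_def)
      then have "cJ * SN \<le> sqrt q * SN" using SD0 by (intro mult_right_mono) auto
      moreover have "2 * SD \<le> sqrt q * SD" using s2 SD0 by (intro mult_right_mono) auto
      moreover have "sqrt q * SA \<le> M * sqrt q" using SAM by (subst mult.commute, intro mult_right_mono) (auto simp: q_def)
      moreover have "sqrt q * SA = sqrt q * SD + sqrt q * SN" unfolding SN_eq by (simp add: algebra_simps)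
      ultimately show ?thesis by linarith
    qed
  qed
  finally show ?thesis by (simp add: D_def M_def mr_def q_def mult_ac)
qed

end

theorem theorem1p3:
  fixes u v :: "'a::{field,finite}"
  assumes "CARD('a) > 2"
    and "u \<noteq> 0" and "v \<noteq> 0"
  shows "\<bar>real (N_uv u v) - theta_nat (CARD('a) - 1) ^ 3 * tau_nat (CARD('a) - 1)
            * real (CARD('a) - 1) * real CARD('a)\<bar>
         \<le> theta_nat (CARD('a) - 1) ^ 4 * real (W_nat (CARD('a) - 1)) ^ 3
            * real (CARD('a) - 1) * sqrt (real CARD('a))"
proof -
  obtain g :: 'a where "primitive_elem g"
    using exists_gen unfolding primitive_elem_def by blast
  then interpret G: gsetup g "CARD('a) - 1" by unfold_locales simp_all
  have h: "\<bar>real (N_uv u v) - G.th ^ 3 * tau_nat (CARD('a) - 1) * real (CARD('a) - 1) * real CARD('a)\<bar>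
      \<le> G.th ^ 4 * (2 ^ card (prime_factors (CARD('a) - 1))) ^ 3 * real (CARD('a) - 1) * sqrt (real CARD('a))"
    by (rule G.main_bound[OF assms(2,3,1)])
  show ?thesis
    unfolding G.theta_eq G.W_eq of_nat_power of_nat_numeral using h .
qed


end
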